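(* Under the empirical-coordination polar coding scheme described in the context, for every block $i\in\{1,\dots,k\}$, $$\mathbb{V}\big(q_{X^{1:N}Y^{1:N}},\widetilde p_{X_i^{1:N}Y_i^{1:N}}\big)\le\sqrt{2\log 2}\,\sqrt{N\delta_N}.$$
   Context: All logarithms are base 2. $\mathbb{V}(p,q)=\sum_x|p(x)-q(x)|$ is the variational distance. For a vector $a^{1:N}$ and index set $\mathcal{A}\subseteq\{1,\dots,N\}$, $a^{1:N}[\mathcal{A}]$ is the subvector indexed by $\mathcal{A}$. Setting (empirical coordination scheme): Let $\mathcal{X},\mathcal{Y}$ be finite alphabets with $|\mathcal{Y}|$ prime, identified with $\mathbb{F}_{|\mathcal{Y}|}$, and $q_{XY}$ a target joint distribution. Let $N=2^n$, $G_n=\begin{bmatrix}1&0\\1&1\end{bmatrix}^{\otimes n}$ over $\mathbb{F}_{|\mathcal{Y}|}$, $(X^{1:N},Y^{1:N})$ i.i.d. $q_{XY}$ (law $q_{X^{1:N}Y^{1:N}}$), and $U^{1:N}=Y^{1:N}G_n$. Fix $\beta\in(0,1/2)$, $\delta_N=2^{-N^\beta}$, and $\mathcal{H}_Y=\{j: H(U^j|U^{1:j-1})>\delta_N\}$, $\mathcal{V}_{Y|X}=\{j: H(U^j|U^{1:j-1}X^{1:N})>\log|\mathcal{Y}|-\delta_N\}$. Node 1 observes, in each block $i\in\{1,\dots,k\}$, $X_i^{1:N}$ i.i.d. $q_X$ (independent across blocks). Common randomness $C_1$ uniform on $\mathcal{Y}^{|\mathcal{V}_{Y|X}|}$ is shared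 by both nodes. In block $i$, Node 1 sets $\widetilde U_i^{1:N}[\mathcal{V}_{Y|X}]=C_1$ (same in all blocks) and, for the remaining indices $j$ in increasing order, draws $\widetilde U_i^j$ according to $q_{U^j|U^{1:j-1}X^{1:N}}(\cdot|\widetilde U_i^{1:j-1},X_i^{1:N})$ if $j\in\mathcal{H}_Y\setminus\mathcal{V}_{Y|X}$ and according to $q_{U^j|U^{1:j-1}}(\cdot|\widetilde U_i^{1:j-1})$ if $j\notin\mathcal{H}_Y$. Node 1 sends $M_i=\widetilde U_i^{1:N}[\mathcal{H}_Y\setminus\mathcal{V}_{Y|X}]$ together with the randomness $\widetilde C_i$ used to draw $\widetilde U_i^{1:N}[\mathcal{H}_Y^c]$; Node 2 thus reconstructs $\widetilde U_i^{1:N}$ and outputs $\widetilde Y_i^{1:N}=\widetilde U_i^{1:N}G_n$. $\widetilde p_{X_i^{1:N}Y_i^{1:N}}$ is the joint law of $(X_i^{1:N},\widetilde Y_i^{1:N})$. *)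

theory Defs
  imports "HOL-Probability.Probability" "HOL-Library.FuncSet"
begin

fun iid_pmf :: "nat \<Rightarrow> 'a pmf \<Rightarrow> 'a list pmf" where
  "iid_pmf 0 P = return_pmf []"
| "iid_pmf (Suc m) P = bind_pmf P (\<lambda>a. map_pmf (\<lambda>as. a # as) (iid_pmf m P))"

(* conditional entropy H(A|B) in bits for a joint law of (A,B) with finite support *)
definition cond_entropy :: "('a \<times> 'b) pmf \<Rightarrow> real" where
  "cond_entropy P = (\<Sum>z\<in>set_pmf P. pmf P z * log 2 (pmf (map_pmf snd P) (snd z) / pmf P z))"

definition var_dist :: "'a pmf \<Rightarrow> 'a pmf \<Rightarrow> real" where
  "var_dist P Q = (\<Sum>\<^sub>\<infinity>z. \<bar>pmf P z - pmf Q z\<bar>)"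

(* conditional law of A given B = b from a joint law of (A,B); fallback d if P(B=b)=0 *)
definition cond_dist :: "('a \<times> 'b) pmf \<Rightarrow> 'b \<Rightarrow> 'a \<Rightarrow> 'a pmf" where
  "cond_dist P b d = (if b \<in> snd ` set_pmf P then map_pmf fst (cond_pmf P {z. snd z = b})
                      else return_pmf d)"

(* kernel F = [[1,0],[1,1]] on indices {0,1} *)
definition polar_kernel :: "nat \<Rightarrow> nat \<Rightarrow> nat" where
  "polar_kernel a b = (if a = 0 \<and> b = 1 then 0 else 1)"

(* G_n = F^{\<otimes> n}, entries indexed by 0..2^n-1, G_n = F \<otimes> G_{n-1} *)
fun polar_G :: "nat \<Rightarrow> nat \<Rightarrow> nat \<Rightarrow> nat" where
  "polar_G 0 a b = 1"
| "polar_G (Suc n) a b = polar_kernel (a div 2^n) (b div 2^n) * polar_G n (a mod 2^n) (b mod 2^n)"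

definition polar_transform :: "nat \<Rightarrow> nat \<Rightarrow> nat list \<Rightarrow> nat list" where
  "polar_transform p n y = map (\<lambda>b. (\<Sum>a<2^n. y ! a * polar_G n a b) mod p) [0..<2^n]"

definition polar_inverse :: "nat \<Rightarrow> nat \<Rightarrow> nat list \<Rightarrow> nat list" where
  "polar_inverse p n u = (THE y. length y = 2^n \<and> set y \<subseteq> {..<p} \<and> polar_transform p n y = u)"

definition target_law :: "nat \<Rightarrow> ('x \<times> nat) pmf \<Rightarrow> ('x list \<times> nat list) pmf" where
  "target_law n q = map_pmf (\<lambda>l. (map fst l, map snd l)) (iid_pmf (2^n) q)"

definition XU_law :: "nat \<Rightarrow> nat \<Rightarrow> ('x \<times> nat) pmf \<Rightarrow> ('x list \<times> nat list) pmf" where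
  "XU_law p n q = map_pmf (\<lambda>(x, y). (x, polar_transform p n y)) (target_law n q)"

definition delta :: "nat \<Rightarrow> real \<Rightarrow> real" where
  "delta n \<beta> = 2 powr (- (real (2^n) powr \<beta>))"

(* 0-based index j: U^{j+1} in the paper is u ! j, U^{1:j} is take j u *)
definition law_U_prefix :: "nat \<Rightarrow> nat \<Rightarrow> ('x \<times> nat) pmf \<Rightarrow> nat \<Rightarrow> (nat \<times> nat list) pmf" where
  "law_U_prefix p n q j = map_pmf (\<lambda>(x, u). (u ! j, take j u)) (XU_law p n q)"

definition law_U_prefix_X :: "nat \<Rightarrow> nat \<Rightarrow> ('x \<times> nat) pmf \<Rightarrow> nat \<Rightarrow> (nat \<times> (nat list \<times> 'x list)) pmf" where
  "law_U_prefix_X p n q j = map_pmf (\<lambda>(x, u). (u ! j, (take j u, x))) (XU_law p n q)"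

definition H_set :: "nat \<Rightarrow> nat \<Rightarrow> real \<Rightarrow> ('x \<times> nat) pmf \<Rightarrow> nat set" where
  "H_set p n \<beta> q = {j. j < 2^n \<and> cond_entropy (law_U_prefix p n q j) > delta n \<beta>}"

definition V_set :: "nat \<Rightarrow> nat \<Rightarrow> real \<Rightarrow> ('x \<times> nat) pmf \<Rightarrow> nat set" where
  "V_set p n \<beta> q = {j. j < 2^n \<and> cond_entropy (law_U_prefix_X p n q j) > log 2 (real p) - delta n \<beta>}"

(* sequential generation of the first j entries of \<tilde>U given common randomness c and x *)
fun sample_U :: "nat \<Rightarrow> nat \<Rightarrow> real \<Rightarrow> ('x \<times> nat) pmf \<Rightarrow> (nat \<Rightarrow> nat) \<Rightarrow> 'x list \<Rightarrow> nat \<Rightarrow> nat list pmf" where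
  "sample_U p n \<beta> q c x 0 = return_pmf []"
| "sample_U p n \<beta> q c x (Suc j) =
     bind_pmf (sample_U p n \<beta> q c x j) (\<lambda>pre. map_pmf (\<lambda>v. pre @ [v])
       (if j \<in> V_set p n \<beta> q then return_pmf (c j)
        else if j \<in> H_set p n \<beta> q then cond_dist (law_U_prefix_X p n q j) (pre, x) 0
        else cond_dist (law_U_prefix p n q j) pre 0))"

definition block_pmf :: "nat \<Rightarrow> nat \<Rightarrow> real \<Rightarrow> ('x \<times> nat) pmf \<Rightarrow> (nat \<Rightarrow> nat) \<Rightarrow> ('x list \<times> nat list) pmf" where
  "block_pmf p n \<beta> q c = bind_pmf (iid_pmf (2^n) (map_pmf fst q))
     (\<lambda>x. map_pmf (\<lambda>u. (x, polar_inverse p n u)) (sample_U p n \<beta> q c x (2^n)))"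

fun blocks_pmf :: "nat \<Rightarrow> nat \<Rightarrow> real \<Rightarrow> ('x \<times> nat) pmf \<Rightarrow> (nat \<Rightarrow> nat) \<Rightarrow> nat \<Rightarrow> ('x list \<times> nat list) list pmf" where
  "blocks_pmf p n \<beta> q c 0 = return_pmf []"
| "blocks_pmf p n \<beta> q c (Suc m) = bind_pmf (block_pmf p n \<beta> q c)
     (\<lambda>b. map_pmf (\<lambda>bs. b # bs) (blocks_pmf p n \<beta> q c m))"

(* whole scheme over k blocks: C_1 uniform on Y^{V_{Y|X}}, shared by all blocks *)
definition scheme_pmf :: "nat \<Rightarrow> nat \<Rightarrow> real \<Rightarrow> ('x \<times> nat) pmf \<Rightarrow> nat \<Rightarrow> ('x list \<times> nat list) list pmf" where
  "scheme_pmf p n \<beta> q k = bind_pmf (pmf_of_set (PiE (V_set p n \<beta> q) (\<lambda>_. {..<p})))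
     (\<lambda>c. blocks_pmf p n \<beta> q c k)"

(* \<tilde>p_{X_i Y_i}, blocks numbered 1..k *)
definition block_law :: "nat \<Rightarrow> nat \<Rightarrow> real \<Rightarrow> ('x \<times> nat) pmf \<Rightarrow> nat \<Rightarrow> nat \<Rightarrow> ('x list \<times> nat list) pmf" where
  "block_law p n \<beta> q k i = map_pmf (\<lambda>bs. bs ! (i - 1)) (scheme_pmf p n \<beta> q k)"

end

theory Submission
  imports Defs
begin


definition rr :: "real \<Rightarrow> real" where "rr y = 3*(y-1)*(y+5)/(2*(y+2)^2)"

lemma aux_f_mono:
  fixes a b :: real assumes "0 < a" "a \<le> b"
  shows "ln a - rr a \<le> ln b - rr b"
  unfolding rr_def
proof (rule DERIV_nonneg_imp_nondecreasing[OF assms(2)])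
  fix y :: real assume y: "a \<le> y" "y \<le> b"
  hence yp: "y > 0" using assms by simp
  have d: "((\<lambda>y. ln y - 3*(y-1)*(y+5)/(2*(y+2)^2)) has_real_derivative
        (1/y - (3*((1*(y+5) + (y-1)*1)*(2*(y+2)^2)) - 3*(y-1)*(y+5)*(2*(2*(y+2)*1)))/(2*(y+2)^2)^2)) (at y)"
    using yp by (auto intro!: derivative_eq_intros simp: power2_eq_square)
  have eq: "(3*((1*(y+5) + (y-1)*1)*(2*(y+2)^2)) - 3*(y-1)*(y+5)*(2*(2*(y+2)*1)))/(2*(y+2)^2)^2
       = 27/(y+2)^3"
  proof -
    have n1: "(2*(y+2)^2)^2 \<noteq> 0" "(y+2)^3 \<noteq> 0" using yp by auto
    show ?thesis unfolding frac_eq_eq[OF n1] by (simp add: power2_eq_square power3_eq_cube algebra_simps)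
  qed
  have "27*y \<le> (y+2)^3"
  proof -
    have "(y+2)^3 - 27*y = (y-1)^2*(y+8)" by (simp add: power2_eq_square power3_eq_cube algebra_simps)
    moreover have "(y-1)^2*(y+8) \<ge> 0" using yp by simp
    ultimately show ?thesis by linarith
  qed
  hence "27/(y+2)^3 \<le> 1/y" using yp by (simp add: field_simps)
  thus "\<exists>D. ((\<lambda>y. ln y - 3*(y-1)*(y+5)/(2*(y+2)^2)) has_real_derivative D) (at y) \<and> 0 \<le> D"
    using d eq by auto
qed

lemma aux_f_sign1: "1 \<le> (y::real) \<Longrightarrow> rr y \<le> ln y"
  using aux_f_mono[of 1 y] by (simp add: rr_def)
lemma aux_f_sign2: "0 < (y::real) \<Longrightarrow> y \<le> 1 \<Longrightarrow> ln y \<le> rr y"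
  using aux_f_mono[of y 1] by (simp add: rr_def)

lemma aux_g_deriv:
  assumes "(y::real) > 0"
  shows "((\<lambda>y. y * ln y - y + 1 - 3*(y-1)^2/(2*y+4)) has_real_derivative (ln y - rr y)) (at y)"
proof -
  have d: "((\<lambda>y. y * ln y - y + 1 - 3*(y-1)^2/(2*y+4)) has_real_derivative
     (1 * ln y + y * (1/y) - 1 + 0 - (3*(2*(y-1)*1)*(2*y+4) - 3*(y-1)^2*2)/(2*y+4)^2)) (at y)"
    using assms by (auto intro!: derivative_eq_intros simp: power2_eq_square)
  have e: "1 * ln y + y * (1/y) - 1 + 0 - (3*(2*(y-1)*1)*(2*y+4) - 3*(y-1)^2*2)/(2*y+4)^2 = ln y - rr y"
  proof -
    have n1: "(2*y+4)^2 \<noteq> 0" "2*(y+2)^2 \<noteq> 0" using assms by auto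
    have "(3*(2*(y-1)*1)*(2*y+4) - 3*(y-1)^2*2)/(2*y+4)^2 = rr y"
      unfolding rr_def frac_eq_eq[OF n1] by (simp add: power2_eq_square algebra_simps)
    thus ?thesis using assms by simp
  qed
  show ?thesis using d unfolding e .
qed

lemma pointwise_pinsker:
  fixes x :: real assumes "0 \<le> x"
  shows "3*(x-1)^2 \<le> (2*x+4)*(x * ln x - x + 1)"
proof (cases "x = 0")
  case True thus ?thesis by simp
next
  case False
  hence xp: "x > 0" using assms by simp
  let ?g = "\<lambda>y::real. y * ln y - y + 1 - 3*(y-1)^2/(2*y+4)"
  have "?g 1 \<le> ?g x"
  proof (cases "x \<ge> 1")
    case True
    show ?thesis
    proof (rule DERIV_nonneg_imp_nondecreasing[OF True])
      fix y assume "1 \<le> y" "y \<le> x"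
      thus "\<exists>D. (?g has_real_derivative D) (at y) \<and> 0 \<le> D"
        using aux_g_deriv[of y] aux_f_sign1[of y] by auto
    qed
  next
    case False
    show ?thesis
    proof (rule DERIV_nonpos_imp_nonincreasing[of x 1 ?g])
      show "x \<le> 1" using False by simp
      fix y assume "x \<le> y" "y \<le> 1"
      thus "\<exists>D. (?g has_real_derivative D) (at y) \<and> D \<le> 0"
        using aux_g_deriv[of y] aux_f_sign2[of y] xp by auto
    qed
  qed
  hence "0 \<le> x * ln x - x + 1 - 3*(x-1)^2/(2*x+4)" by simp
  thus ?thesis using xp by (simp add: field_simps)
qed


lemma var_dist_finite:
  assumes "finite S" "set_pmf P \<subseteq> S" "set_pmf Q \<subseteq> S"
  shows "var_dist P Q = (\<Sum>z\<in>S. \<bar>pmf P z - pmf Q z\<bar>)"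
proof -
  have z: "x \<notin> S \<Longrightarrow> pmf P x = 0 \<and> pmf Q x = 0" for x using assms by (meson pmf_eq_0_set_pmf subsetD)
  have "var_dist P Q = infsum (\<lambda>z. \<bar>pmf P z - pmf Q z\<bar>) S"
    unfolding var_dist_def
    by (rule infsum_cong_neutral) (use z in auto)
  thus ?thesis using assms by simp
qed

lemma amgm_aux:
  fixes A B t d :: real
  assumes "0 \<le> A" "0 \<le> B" "0 < t" "d^2 \<le> A*B"
  shows "2*\<bar>d\<bar> \<le> t*A + B/t"
proof -
  have "(t*A + B/t)^2 - 4*(A*B) = (t*A - B/t)^2"
    using assms(3) by (simp add: power2_eq_square field_simps)
  hence "(2*\<bar>d\<bar>)^2 \<le> (t*A + B/t)^2" using assms(4)
    by (simp add: power2_eq_square) (smt (verit) zero_le_square)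
  moreover have "0 \<le> t*A + B/t" using assms by simp
  ultimately show ?thesis by (rule power2_le_imp_le)
qed

lemma pinsker_finite:
  fixes P R :: "'a pmf"
  assumes fin: "finite (set_pmf R)" and sub: "set_pmf P \<subseteq> set_pmf R"
  shows "var_dist P R \<le> sqrt (2 * measure_pmf.expectation P (\<lambda>z. ln (pmf P z / pmf R z)))"
proof -
  define S where "S = set_pmf R"
  define x where "x z = pmf P z / pmf R z" for z
  define KL where "KL = measure_pmf.expectation P (\<lambda>z. ln (pmf P z / pmf R z))"
  have Rpos: "z \<in> S \<Longrightarrow> pmf R z > 0" for z unfolding S_def by (simp add: pmf_positive)
  have Pz: "z \<in> S \<Longrightarrow> pmf P z = pmf R z * x z" for z using Rpos[of z] unfolding x_def by simp
  have x0: "0 \<le> x z" for z unfolding x_def by simp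
  have V: "var_dist P R = (\<Sum>z\<in>S. \<bar>pmf P z - pmf R z\<bar>)"
    by (rule var_dist_finite) (use fin sub in \<open>auto simp: S_def\<close>)
  have KLs: "KL = (\<Sum>z\<in>S. pmf P z * ln (x z))"
    unfolding KL_def x_def
    by (subst integral_measure_pmf_real[of S]) (use fin sub in \<open>auto simp: S_def mult.commute\<close>)
  have sP: "(\<Sum>z\<in>S. pmf P z) = 1" by (rule sum_pmf_eq_1) (use fin sub in \<open>auto simp: S_def\<close>)
  have sR: "(\<Sum>z\<in>S. pmf R z) = 1" by (rule sum_pmf_eq_1) (use fin in \<open>auto simp: S_def\<close>)
  have phi: "(\<Sum>z\<in>S. pmf R z * (x z * ln (x z) - x z + 1)) = KL"
  proof -
    have "(\<Sum>z\<in>S. pmf R z * (x z * ln (x z) - x z + 1)) =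
          (\<Sum>z\<in>S. pmf P z * ln (x z) - pmf P z + pmf R z)"
      by (rule sum.cong) (auto simp: Pz algebra_simps)
    also have "\<dots> = KL - 1 + 1" by (simp add: sum.distrib sum_subtractf KLs sP sR)
    finally show ?thesis by simp
  qed
  have phinn: "0 \<le> x z * ln (x z) - x z + 1" for z
  proof -
    have "0 \<le> 3*(x z-1)^2" by simp
    also have "\<dots> \<le> (2*x z+4)*(x z * ln (x z) - x z + 1)" by (rule pointwise_pinsker[OF x0])
    finally show ?thesis using x0[of z] by (simp add: zero_le_mult_iff)
  qed
  have KLnn: "0 \<le> KL" unfolding phi[symmetric] by (rule sum_nonneg) (simp add: phinn)
  have bound: "var_dist P R \<le> t + KL/(2*t)" if t: "t > 0" for t
  proof -
    have "\<bar>pmf P z - pmf R z\<bar> \<le> (t/3 * pmf P z + 2*t/3 * pmf R z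
            + (pmf P z * ln (x z) - pmf P z + pmf R z)/(2*t))" if z: "z \<in> S" for z
    proof -
      have "2*\<bar>x z - 1\<bar> \<le> t*((2*x z+4)/3) + (x z * ln (x z) - x z + 1)/t"
        apply (rule amgm_aux) using x0[of z] phinn[of z] t pointwise_pinsker[OF x0[of z]] by auto
      hence "pmf R z * (2*\<bar>x z - 1\<bar>) \<le> pmf R z * (t*((2*x z+4)/3) + (x z * ln (x z) - x z + 1)/t)"
        using Rpos[OF z] by (intro mult_left_mono) auto
      moreover have "\<bar>pmf P z - pmf R z\<bar> = pmf R z * \<bar>x z - 1\<bar>"
      proof -
        have "pmf P z - pmf R z = pmf R z * (x z - 1)" by (simp add: Pz[OF z] algebra_simps)
        thus ?thesis using Rpos[OF z] by (simp add: abs_mult)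
      qed
      moreover have "pmf R z * (t*((2*x z+4)/3) + (x z * ln (x z) - x z + 1)/t) =
           2*(t/3 * pmf P z + 2*t/3 * pmf R z + (pmf P z * ln (x z) - pmf P z + pmf R z)/(2*t))"
        using t by (simp add: Pz[OF z] field_simps)
      moreover have "pmf R z * (2*\<bar>x z - 1\<bar>) = 2*(pmf R z * \<bar>x z - 1\<bar>)" by simp
      ultimately show ?thesis by (smt (verit))
    qed
    hence "var_dist P R \<le> (\<Sum>z\<in>S. t/3 * pmf P z + 2*t/3 * pmf R z
            + (pmf P z * ln (x z) - pmf P z + pmf R z)/(2*t))"
      unfolding V by (rule sum_mono)
    also have "\<dots> = t/3 * 1 + 2*t/3 * 1 + (KL - 1 + 1)/(2*t)"
      using sum_distrib_left[of t "pmf P" S, symmetric] sum_distrib_left[of "2*t" "pmf R" S, symmetric]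
      by (simp add: sum.distrib sum_subtractf KLs sP sR sum_distrib_left sum_divide_distrib[symmetric])
    finally show ?thesis by simp
  qed
  have "var_dist P R \<le> sqrt (2*KL)"
  proof (cases "KL = 0")
    case True
    have "var_dist P R \<le> 0"
    proof (rule ccontr)
      assume "\<not> var_dist P R \<le> 0"
      hence vp: "var_dist P R > 0" by simp
      from bound[OF half_gt_zero[OF vp]] True vp show False by simp
    qed
    thus ?thesis using True by simp
  next
    case False
    hence KLp: "KL > 0" using KLnn by simp
    define t where "t = sqrt (KL/2)"
    have tp: "t > 0" using KLp unfolding t_def by simp
    have "t + KL/(2*t) = sqrt (2*KL)"
    proof -
      have tt: "t*t = KL/2" unfolding t_def using KLp by simp
      have "KL/(2*t) = t" using tt tp by (simp add: field_simps)
      moreover have "sqrt (2*KL) = 2*t"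
      proof -
        have "sqrt (2*KL) = sqrt (2^2 * (KL/2))" by simp
        also have "\<dots> = 2 * sqrt (KL/2)" by (simp only: real_sqrt_mult real_sqrt_abs)
        finally show ?thesis unfolding t_def .
      qed
      ultimately show ?thesis by simp
    qed
    thus ?thesis using bound[OF tp] by simp
  qed
  thus ?thesis unfolding KL_def .
qed


lemma map_iid_pmf: "map_pmf (map f) (iid_pmf m P) = iid_pmf m (map_pmf f P)"
proof (induction m)
  case (Suc m) thus ?case by (simp add: map_bind_pmf bind_map_pmf map_pmf_comp flip: Suc.IH)
qed simp

lemma set_iid_pmf: "xs \<in> set_pmf (iid_pmf m P) \<Longrightarrow> length xs = m \<and> set xs \<subseteq> set_pmf P"
  by (induction m arbitrary: xs) fastforce+

lemma blocks_nth: "j < m \<Longrightarrow> map_pmf (\<lambda>bs. bs ! j) (blocks_pmf p n \<beta> q c m) = block_pmf p n \<beta> q c"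
proof (induction m arbitrary: j)
  case 0 thus ?case by simp
next
  case (Suc m)
  show ?case
  proof (cases j)
    case 0 thus ?thesis by (simp add: map_bind_pmf map_pmf_comp map_pmf_const bind_return_pmf')
  next
    case (Suc j')
    hence "j' < m" using Suc.prems by simp
    thus ?thesis using Suc.IH[of j'] \<open>j = Suc j'\<close>
      by (simp add: map_bind_pmf map_pmf_comp bind_pmf_const)
  qed
qed

lemma polar_G_diag: "a < 2^n \<Longrightarrow> polar_G n a a = 1"
  by (induction n arbitrary: a) (auto simp: polar_kernel_def)

lemma polar_G_upper: "a < b \<Longrightarrow> b < 2^n \<Longrightarrow> polar_G n a b = 0"
proof (induction n arbitrary: a b)
  case 0 thus ?case by simp
next
  case (Suc n)
  have "a div 2^n \<le> b div 2^n" using Suc.prems by (simp add: div_le_mono)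
  show ?case
  proof (cases "a div 2^n = b div 2^n")
    case True
    hence "a mod 2^n < b mod 2^n" using Suc.prems
      by (metis div_mult_mod_eq add_less_cancel_left)
    thus ?thesis using Suc.IH[of "a mod 2^n" "b mod 2^n"] by simp
  next
    case False
    hence "a div 2^n < b div 2^n" using \<open>a div 2^n \<le> b div 2^n\<close> by simp
    moreover have "b div 2^n < 2" using Suc.prems by (simp add: less_mult_imp_div_less)
    ultimately have "a div 2^n = 0" "b div 2^n = 1" by auto
    thus ?thesis by (simp add: polar_kernel_def)
  qed
qed


lemma nat_mod_add_cancel:
  fixes a b c p :: nat
  assumes "(a + c) mod p = (b + c) mod p" shows "a mod p = b mod p"
proof -
  have "int (a + c) mod int p = int (b + c) mod int p" using assms by (metis of_nat_mod)
  hence "int p dvd (int (a + c) - int (b + c))" by (simp add: mod_eq_dvd_iff)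
  hence "int p dvd (int a - int b)" by simp
  hence "int a mod int p = int b mod int p" by (simp add: mod_eq_dvd_iff)
  thus ?thesis by (metis of_nat_mod of_nat_eq_iff)
qed

lemma length_polar_transform[simp]: "length (polar_transform p n y) = 2^n"
  by (simp add: polar_transform_def)

lemma polar_transform_inj:
  assumes ly: "length y = 2^n" and ly': "length y' = 2^n"
    and sy: "set y \<subseteq> {..<p}" and sy': "set y' \<subseteq> {..<p}"
    and eq: "polar_transform p n y = polar_transform p n y'"
  shows "y = y'"
proof -
  define N where "N = (2::nat)^n"
  have main: "b < N \<Longrightarrow> y ! b = y' ! b" for b
  proof (induction "N - b" arbitrary: b rule: less_induct)
    case less
    have IH: "b < a \<Longrightarrow> a < N \<Longrightarrow> y ! a = y' ! a" for a using less by auto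
    have "polar_transform p n y ! b = polar_transform p n y' ! b" using eq by simp
    hence e1: "(\<Sum>a<N. y ! a * polar_G n a b) mod p = (\<Sum>a<N. y' ! a * polar_G n a b) mod p"
      using less.prems unfolding polar_transform_def N_def by simp
    have split: "(\<Sum>a<N. f a * polar_G n a b) = f b + (\<Sum>a\<in>{..<N}-{b}. f a * polar_G n a b)" for f :: "nat \<Rightarrow> nat"
      using less.prems by (subst sum.remove[of _ b]) (auto simp: polar_G_diag N_def)
    have same: "(\<Sum>a\<in>{..<N}-{b}. y ! a * polar_G n a b) = (\<Sum>a\<in>{..<N}-{b}. y' ! a * polar_G n a b)"
    proof (rule sum.cong)
      fix a assume a: "a \<in> {..<N}-{b}"
      show "y ! a * polar_G n a b = y' ! a * polar_G n a b"
      proof (cases "a < b")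
        case True thus ?thesis using less.prems polar_G_upper[of a b n] by (simp add: N_def)
      next
        case False thus ?thesis using a IH[of a] by auto
      qed
    qed simp
    have "y ! b mod p = y' ! b mod p"
      using e1 unfolding split[of "(!) y"] split[of "(!) y'"] same by (rule nat_mod_add_cancel)
    moreover have "y ! b < p" using sy ly less.prems unfolding N_def by (metis lessThan_iff nth_mem subsetD)
    moreover have "y' ! b < p" using sy' ly' less.prems unfolding N_def by (metis lessThan_iff nth_mem subsetD)
    ultimately show ?case by simp
  qed
  show ?thesis by (rule nth_equalityI) (use ly ly' main N_def in auto)
qed

lemma polar_transform_range: "p > 0 \<Longrightarrow> set (polar_transform p n y) \<subseteq> {..<p}"
  by (auto simp: polar_transform_def)

lemma polar_inverse_transform:
  assumes "length y = 2^n" "set y \<subseteq> {..<p}"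
  shows "polar_inverse p n (polar_transform p n y) = y"
  unfolding polar_inverse_def
  by (rule the_equality) (use assms polar_transform_inj in auto)


lemma pmf_bind_delta:
  assumes "\<And>a. a \<noteq> b \<Longrightarrow> pmf (f a) z = 0"
  shows "pmf (bind_pmf A f) z = pmf A b * pmf (f b) z"
proof -
  have "pmf (bind_pmf A f) z = (\<integral>a. pmf (f a) z \<partial>measure_pmf A)" by (rule pmf_bind)
  also have "\<dots> = (\<Sum>a\<in>{b}. pmf (f a) z * pmf A a)"
    by (rule integral_measure_pmf_real) (use assms in auto)
  finally show ?thesis by simp
qed

lemma pmf_bind_snoc:
  "pmf (bind_pmf A (\<lambda>pre. map_pmf (\<lambda>v. pre @ [v]) (F pre))) (w @ [a]) = pmf A w * pmf (F w) a"
proof -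
  have "pmf (bind_pmf A (\<lambda>pre. map_pmf (\<lambda>v. pre @ [v]) (F pre))) (w @ [a])
        = pmf A w * pmf (map_pmf (\<lambda>v. w @ [v]) (F w)) (w @ [a])"
  proof (rule pmf_bind_delta)
    fix pre assume "pre \<noteq> w"
    hence "w @ [a] \<notin> set_pmf (map_pmf (\<lambda>v. pre @ [v]) (F pre))" by auto
    thus "pmf (map_pmf (\<lambda>v. pre @ [v]) (F pre)) (w @ [a]) = 0" by (simp add: pmf_eq_0_set_pmf)
  qed
  also have "pmf (map_pmf (\<lambda>v. w @ [v]) (F w)) (w @ [a]) = pmf (F w) a"
    by (rule pmf_map_inj') (auto simp: inj_def)
  finally show ?thesis .
qed

lemma pmf_bind_Pair:
  "pmf (bind_pmf A (\<lambda>x. map_pmf (Pair x) (F x))) (x, u) = pmf A x * pmf (F x) u"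
proof -
  have "pmf (bind_pmf A (\<lambda>x. map_pmf (Pair x) (F x))) (x, u) = pmf A x * pmf (map_pmf (Pair x) (F x)) (x, u)"
  proof (rule pmf_bind_delta)
    fix x' assume "x' \<noteq> x"
    hence "(x, u) \<notin> set_pmf (map_pmf (Pair x') (F x'))" by auto
    thus "pmf (map_pmf (Pair x') (F x')) (x, u) = 0" by (simp add: pmf_eq_0_set_pmf)
  qed
  also have "pmf (map_pmf (Pair x) (F x)) (x, u) = pmf (F x) u"
    by (rule pmf_map_inj') (auto simp: inj_def)
  finally show ?thesis .
qed

lemma pmf_cond_dist:
  assumes "b \<in> snd ` set_pmf L"
  shows "pmf (cond_dist L b d) a = pmf L (a, b) / pmf (map_pmf snd L) b"
proof -
  define C where "C = cond_pmf L {z. snd z = b}"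
  have ne: "set_pmf L \<inter> {z. snd z = b} \<noteq> {}" using assms by auto
  have cd: "cond_dist L b d = map_pmf fst C" unfolding cond_dist_def C_def using assms by simp
  have setC: "set_pmf C = set_pmf L \<inter> {z. snd z = b}" unfolding C_def by (rule set_cond_pmf[OF ne])
  have mb: "measure_pmf.prob L {z. snd z = b} = pmf (map_pmf snd L) b"
    by (simp add: pmf_map vimage_def)
  show ?thesis
  proof (cases "(a, b) \<in> set_pmf L")
    case True
    have "pmf (map_pmf fst C) (fst (a, b)) = pmf C (a, b)"
      by (rule pmf_map_inj) (auto simp: setC inj_on_def True)
    also have "\<dots> = pmf L (a, b) / pmf (map_pmf snd L) b"
      unfolding C_def by (simp add: pmf_cond[OF ne] mb)
    finally show ?thesis by (simp add: cd)
  next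
    case False
    hence "a \<notin> set_pmf (map_pmf fst C)" by (auto simp: setC)
    hence "pmf (map_pmf fst C) a = 0" by (simp add: pmf_eq_0_set_pmf)
    moreover have "pmf L (a, b) = 0" using False by (simp add: pmf_eq_0_set_pmf)
    ultimately show ?thesis by (simp add: cd)
  qed
qed

lemma pmf_le_map: "pmf M z \<le> pmf (map_pmf f M) (f z)"
proof -
  have "pmf M z = measure_pmf.prob M {z}" by (simp add: measure_pmf_single)
  also have "\<dots> \<le> measure_pmf.prob M (f -` {f z})" by (rule measure_pmf.finite_measure_mono) auto
  finally show ?thesis by (simp add: pmf_map)
qed

definition Kc :: "nat \<Rightarrow> nat \<Rightarrow> real \<Rightarrow> ('x \<times> nat) pmf \<Rightarrow> (nat \<Rightarrow> nat) \<Rightarrow> 'x list \<Rightarrow> nat \<Rightarrow> nat list \<Rightarrow> nat pmf" where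
  "Kc p n \<beta> q c x j pre =
       (if j \<in> V_set p n \<beta> q then return_pmf (c j)
        else if j \<in> H_set p n \<beta> q then cond_dist (law_U_prefix_X p n q j) (pre, x) 0
        else cond_dist (law_U_prefix p n q j) pre 0)"

lemma sample_U_Suc': "sample_U p n \<beta> q c x (Suc j) =
   bind_pmf (sample_U p n \<beta> q c x j) (\<lambda>pre. map_pmf (\<lambda>v. pre @ [v]) (Kc p n \<beta> q c x j pre))"
  by (simp add: Kc_def)

lemma set_sample_U_length: "w \<in> set_pmf (sample_U p n \<beta> q c x m) \<Longrightarrow> length w = m"
  by (induction m arbitrary: w) auto

lemma pmf_sample_U:
  "pmf (sample_U p n \<beta> q c x m) w =
     (if length w = m then (\<Prod>j<m. pmf (Kc p n \<beta> q c x j (take j w)) (w ! j)) else 0)"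
proof (induction m arbitrary: w)
  case 0 thus ?case by (auto simp: pmf_return)
next
  case (Suc m)
  show ?case
  proof (cases "length w = Suc m")
    case True
    then obtain w' a where w: "w = w' @ [a]" by (metis length_Suc_conv_rev)
    have lw': "length w' = m" using True w by simp
    have "pmf (sample_U p n \<beta> q c x (Suc m)) w = pmf (sample_U p n \<beta> q c x m) w' * pmf (Kc p n \<beta> q c x m w') a"
      unfolding sample_U_Suc' w by (rule pmf_bind_snoc)
    also have "\<dots> = (\<Prod>j<Suc m. pmf (Kc p n \<beta> q c x j (take j w)) (w ! j))"
      using lw' by (simp add: Suc.IH w nth_append)
    finally show ?thesis using True by simp
  next
    case False
    hence "w \<notin> set_pmf (sample_U p n \<beta> q c x (Suc m))" using set_sample_U_length by blast
    thus ?thesis using False by (simp add: pmf_eq_0_set_pmf)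
  qed
qed


definition kap :: "nat \<Rightarrow> nat \<Rightarrow> real \<Rightarrow> ('x \<times> nat) pmf \<Rightarrow> nat \<Rightarrow> nat \<Rightarrow> nat list \<Rightarrow> 'x list \<Rightarrow> real" where
  "kap p n \<beta> q j a w x =
     (if j \<in> V_set p n \<beta> q then (if a < p then 1 / real p else 0)
      else if j \<in> H_set p n \<beta> q then pmf (cond_dist (law_U_prefix_X p n q j) (w, x) 0) a
      else pmf (cond_dist (law_U_prefix p n q j) w 0) a)"

definition Rlaw :: "nat \<Rightarrow> nat \<Rightarrow> real \<Rightarrow> ('x \<times> nat) pmf \<Rightarrow> ('x list \<times> nat list) pmf" where
  "Rlaw p n \<beta> q = bind_pmf (pmf_of_set (PiE (V_set p n \<beta> q) (\<lambda>_. {..<p})))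
     (\<lambda>c. bind_pmf (iid_pmf (2^n) (map_pmf fst q)) (\<lambda>x. map_pmf (Pair x) (sample_U p n \<beta> q c x (2^n))))"

lemma V_sub: "V_set p n \<beta> q \<subseteq> {..<2^n}" unfolding V_set_def by blast
lemma V_fin: "finite (V_set p n \<beta> q)" by (rule finite_subset[OF V_sub]) simp

lemma prod_indic:
  fixes V :: "nat set" assumes "finite V"
  shows "(\<Prod>j\<in>V. (if c j = u ! j then 1 else 0::real)) = (if \<forall>j\<in>V. c j = u ! j then 1 else 0)"
  using assms by (induction V rule: finite_induct) auto

lemma sum_PiE_indic:
  fixes V :: "nat set" and p :: nat and u :: "nat list" assumes V: "finite V"
  shows "(\<Sum>c\<in>PiE V (\<lambda>_. {..<p}). (if \<forall>j\<in>V. c j = u ! j then 1 else 0::real))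
         = (if \<forall>j\<in>V. u ! j < p then 1 else 0)"
proof -
  define C where "C = PiE V (\<lambda>_. {..<p::nat})"
  have fC: "finite C" unfolding C_def using V by (simp add: finite_PiE)
  have "(\<Sum>c\<in>C. (if \<forall>j\<in>V. c j = u ! j then 1 else 0::real)) = (\<Sum>c\<in>{c\<in>C. \<forall>j\<in>V. c j = u ! j}. 1)"
    by (rule sum.inter_filter[OF fC, symmetric])
  also have "{c\<in>C. \<forall>j\<in>V. c j = u ! j} = (if \<forall>j\<in>V. u ! j < p then {restrict (\<lambda>j. u ! j) V} else {})"
  proof (cases "\<forall>j\<in>V. u ! j < p")
    case True
    have r: "restrict (\<lambda>j. u ! j) V \<in> C" unfolding C_def using True by auto
    have "{c\<in>C. \<forall>j\<in>V. c j = u ! j} = {restrict (\<lambda>j. u ! j) V}"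
    proof (safe)
      fix c assume c: "c \<in> C" "\<forall>j\<in>V. c j = u ! j"
      show "c = restrict (\<lambda>j. u ! j) V" by (rule PiE_ext[OF c(1)[unfolded C_def] r[unfolded C_def]]) (use c in auto)
    qed (use r in auto)
    thus ?thesis using True by simp
  next
    case False
    then obtain j where "j \<in> V" "\<not> u ! j < p" by auto
    hence e: "{c\<in>C. \<forall>j\<in>V. c j = u ! j} = {}" unfolding C_def by (auto simp: PiE_iff)
    show ?thesis unfolding if_not_P[OF False] by (rule e)
  qed
  finally show ?thesis unfolding C_def by simp
qed

lemma prod_kapV:
  "(\<Prod>j\<in>V_set p n \<beta> q. kap p n \<beta> q j (u ! j) (take j u) x)
     = (if \<forall>j\<in>V_set p n \<beta> q. u ! j < p then (1 / real p) ^ card (V_set p n \<beta> q) else 0)"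
proof -
  have "(\<Prod>j\<in>V_set p n \<beta> q. kap p n \<beta> q j (u ! j) (take j u) x)
       = (\<Prod>j\<in>V_set p n \<beta> q. (if u ! j < p then 1 / real p else 0))"
    by (rule prod.cong) (auto simp: kap_def)
  also have "\<dots> = (if \<forall>j\<in>V_set p n \<beta> q. u ! j < p then (1 / real p) ^ card (V_set p n \<beta> q) else 0)"
  proof (cases "\<forall>j\<in>V_set p n \<beta> q. u ! j < p")
    case True
    hence "(\<Prod>j\<in>V_set p n \<beta> q. (if u ! j < p then 1 / real p else 0)) = (\<Prod>j\<in>V_set p n \<beta> q. 1 / real p)"
      by (intro prod.cong) auto
    thus ?thesis using True by simp
  next
    case False
    then obtain j where "j \<in> V_set p n \<beta> q" "\<not> u ! j < p" by auto
    hence "(\<Prod>j\<in>V_set p n \<beta> q. (if u ! j < p then 1 / real p else 0)) = 0"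
      by (intro prod_zero[OF V_fin]) auto
    thus ?thesis unfolding if_not_P[OF False] .
  qed
  finally show ?thesis .
qed

lemma pmf_Rlaw:
  assumes p: "p > 0" and lu: "length u = 2^n"
  shows "pmf (Rlaw p n \<beta> q) (x, u) = pmf (iid_pmf (2^n) (map_pmf fst q)) x *
            (\<Prod>j<2^n. kap p n \<beta> q j (u ! j) (take j u) x)"
proof -
  define V where "V = V_set p n \<beta> q"
  define C where "C = PiE V (\<lambda>_. {..<p})"
  define I where "I = iid_pmf (2^n) (map_pmf fst q)"
  define A where "A = (\<Prod>j\<in>{..<2^n}-V. kap p n \<beta> q j (u ! j) (take j u) x)"
  have fV: "finite V" unfolding V_def by (rule V_fin)
  have VN: "V \<subseteq> {..<2^n}" unfolding V_def by (rule V_sub)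
  have fC: "finite C" unfolding C_def using fV by (simp add: finite_PiE)
  have neC: "C \<noteq> {}" using p by (auto simp: C_def PiE_eq_empty_iff)
  have cardC: "card C = p ^ card V" unfolding C_def using fV by (simp add: card_PiE)
  have Gc: "pmf (bind_pmf I (\<lambda>x. map_pmf (Pair x) (sample_U p n \<beta> q c x (2^n)))) (x, u)
            = pmf I x * (A * (if \<forall>j\<in>V. c j = u ! j then 1 else 0))" for c
  proof -
    have "(\<Prod>j<2^n. pmf (Kc p n \<beta> q c x j (take j u)) (u ! j))
        = (\<Prod>j\<in>{..<2^n}-V. pmf (Kc p n \<beta> q c x j (take j u)) (u ! j)) *
          (\<Prod>j\<in>V. pmf (Kc p n \<beta> q c x j (take j u)) (u ! j))"
      by (rule prod.subset_diff[OF VN]) simp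
    also have "(\<Prod>j\<in>{..<2^n}-V. pmf (Kc p n \<beta> q c x j (take j u)) (u ! j)) = A"
      unfolding A_def by (rule prod.cong) (auto simp: Kc_def kap_def V_def)
    also have "(\<Prod>j\<in>V. pmf (Kc p n \<beta> q c x j (take j u)) (u ! j)) =
               (\<Prod>j\<in>V. (if c j = u ! j then 1 else 0))"
      by (rule prod.cong) (auto simp: Kc_def V_def pmf_return)
    also have "\<dots> = (if \<forall>j\<in>V. c j = u ! j then 1 else 0)" by (rule prod_indic[OF fV])
    finally show ?thesis by (simp add: pmf_bind_Pair pmf_sample_U lu)
  qed
  have "pmf (Rlaw p n \<beta> q) (x, u) = (\<Sum>c\<in>C. pmf I x * (A * (if \<forall>j\<in>V. c j = u ! j then 1 else 0))) / card C"
  proof -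
    have "pmf (Rlaw p n \<beta> q) (x, u) = (\<integral>c. pmf (bind_pmf I (\<lambda>x. map_pmf (Pair x) (sample_U p n \<beta> q c x (2^n)))) (x, u) \<partial>measure_pmf (pmf_of_set C))"
      unfolding Rlaw_def C_def[symmetric] V_def[symmetric] I_def[symmetric] by (rule pmf_bind)
    also have "\<dots> = (\<Sum>c\<in>C. pmf (bind_pmf I (\<lambda>x. map_pmf (Pair x) (sample_U p n \<beta> q c x (2^n)))) (x, u)) / card C"
      by (rule integral_pmf_of_set[OF neC fC])
    finally show ?thesis by (simp only: Gc)
  qed
  also have "\<dots> = pmf I x * A * (\<Sum>c\<in>C. (if \<forall>j\<in>V. c j = u ! j then 1 else 0)) / card C"
    by (simp add: sum_distrib_left mult.assoc)
  also have "(\<Sum>c\<in>C. (if \<forall>j\<in>V. c j = u ! j then 1 else 0::real)) = (if \<forall>j\<in>V. u ! j < p then 1 else 0)"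
    unfolding C_def by (rule sum_PiE_indic[OF fV])
  also have "pmf I x * A * (if \<forall>j\<in>V. u ! j < p then 1 else 0) / real (card C) =
      pmf I x * (A * (\<Prod>j\<in>V. kap p n \<beta> q j (u ! j) (take j u) x))"
    unfolding cardC V_def prod_kapV using p by (simp add: power_one_over)
  also have "A * (\<Prod>j\<in>V. kap p n \<beta> q j (u ! j) (take j u) x) = (\<Prod>j<2^n. kap p n \<beta> q j (u ! j) (take j u) x)"
    unfolding A_def by (rule prod.subset_diff[OF VN, symmetric]) simp
  finally show ?thesis unfolding I_def .
qed


lemma set_XU_law:
  assumes "(x, u) \<in> set_pmf (XU_law p n q)" "p > 0"
  shows "length x = 2^n \<and> length u = 2^n \<and> set u \<subseteq> {..<p} \<and> x \<in> set_pmf (iid_pmf (2^n) (map_pmf fst q))"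
proof -
  obtain l where l: "l \<in> set_pmf (iid_pmf (2^n) q)" "x = map fst l" "u = polar_transform p n (map snd l)"
    using assms(1) unfolding XU_law_def target_law_def by auto
  have "x \<in> set_pmf (map_pmf (map fst) (iid_pmf (2^n) q))" using l by auto
  hence "x \<in> set_pmf (iid_pmf (2^n) (map_pmf fst q))" by (simp add: map_iid_pmf)
  thus ?thesis using l set_iid_pmf[OF l(1)] polar_transform_range[OF assms(2)] by auto
qed

lemma map_fst_XU_law: "map_pmf fst (XU_law p n q) = iid_pmf (2^n) (map_pmf fst q)"
  unfolding XU_law_def target_law_def by (simp add: map_pmf_comp map_iid_pmf[symmetric] split_beta)

lemma finite_lists_UNIV_x: "finite {x :: 'x::finite list. length x = m}"
  using finite_lists_length_eq[of "UNIV :: 'x set" m] by simp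

definition Sall :: "nat \<Rightarrow> nat \<Rightarrow> ('x list \<times> nat list) set" where
  "Sall p n = {x. length x = 2^n} \<times> {u. set u \<subseteq> {..<p} \<and> length u = 2^n}"

lemma finite_Sall: "finite (Sall p n :: ('x::finite list \<times> nat list) set)"
  unfolding Sall_def by (intro finite_cartesian_product finite_lists_UNIV_x finite_lists_length_eq) simp

lemma set_XU_Sall: "p > 0 \<Longrightarrow> set_pmf (XU_law p n q) \<subseteq> Sall p n"
  unfolding Sall_def using set_XU_law by fastforce

lemma finite_XU: "p > 0 \<Longrightarrow> finite (set_pmf (XU_law p n (q :: ('x::finite \<times> nat) pmf)))"
  using finite_subset[OF set_XU_Sall finite_Sall] by blast

lemma set_cond_dist: "a \<in> set_pmf (cond_dist L b d) \<Longrightarrow> a = d \<or> (a, b) \<in> set_pmf L"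
proof (cases "b \<in> snd ` set_pmf L")
  case True
  hence ne: "set_pmf L \<inter> {z. snd z = b} \<noteq> {}" by auto
  assume "a \<in> set_pmf (cond_dist L b d)"
  thus ?thesis using True unfolding cond_dist_def by (auto simp: set_cond_pmf[OF ne])
next
  case False
  assume "a \<in> set_pmf (cond_dist L b d)"
  thus ?thesis using False unfolding cond_dist_def by auto
qed

lemma set_LX: "(a, b) \<in> set_pmf (law_U_prefix_X p n q j) \<Longrightarrow> j < 2^n \<Longrightarrow> p > 0 \<Longrightarrow> a < p"
proof -
  assume a: "(a, b) \<in> set_pmf (law_U_prefix_X p n q j)" and j: "j < 2^n" and p: "p > 0"
  then obtain x u where xu: "(x, u) \<in> set_pmf (XU_law p n q)" "a = u ! j"
    unfolding law_U_prefix_X_def by auto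
  from set_XU_law[OF xu(1) p] j have "u ! j \<in> {..<p}" by (metis nth_mem subsetD)
  thus ?thesis using xu(2) by simp
qed

lemma set_LU: "(a, b) \<in> set_pmf (law_U_prefix p n q j) \<Longrightarrow> j < 2^n \<Longrightarrow> p > 0 \<Longrightarrow> a < p"
proof -
  assume a: "(a, b) \<in> set_pmf (law_U_prefix p n q j)" and j: "j < 2^n" and p: "p > 0"
  then obtain x u where xu: "(x, u) \<in> set_pmf (XU_law p n q)" "a = u ! j"
    unfolding law_U_prefix_def by auto
  from set_XU_law[OF xu(1) p] j have "u ! j \<in> {..<p}" by (metis nth_mem subsetD)
  thus ?thesis using xu(2) by simp
qed

lemma set_sample_U_range:
  assumes "p > 0" "c \<in> PiE (V_set p n \<beta> q) (\<lambda>_. {..<p})" "m \<le> 2^n"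
  shows "u \<in> set_pmf (sample_U p n \<beta> q c x m) \<Longrightarrow> set u \<subseteq> {..<p}"
  using assms(3)
proof (induction m arbitrary: u)
  case 0 thus ?case by simp
next
  case (Suc m)
  from Suc.prems(1) obtain pre v where u: "u = pre @ [v]" "pre \<in> set_pmf (sample_U p n \<beta> q c x m)"
     "v \<in> set_pmf (Kc p n \<beta> q c x m pre)"
    unfolding sample_U_Suc' by auto
  have "set pre \<subseteq> {..<p}" using Suc.IH[OF u(2)] Suc.prems(2) by simp
  moreover have "v < p"
  proof -
    have mN: "m < 2^n" using Suc.prems(2) by simp
    show ?thesis
    proof (cases "m \<in> V_set p n \<beta> q")
      case True thus ?thesis using u(3) assms(2) unfolding Kc_def by (auto simp: PiE_iff)
    next
      case nV: False
      show ?thesis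
      proof (cases "m \<in> H_set p n \<beta> q")
        case True
        hence "v = 0 \<or> (v, (pre, x)) \<in> set_pmf (law_U_prefix_X p n q m)"
          using u(3) nV unfolding Kc_def by (auto dest: set_cond_dist)
        thus ?thesis using set_LX[OF _ mN assms(1)] assms(1) by auto
      next
        case False
        hence "v = 0 \<or> (v, pre) \<in> set_pmf (law_U_prefix p n q m)"
          using u(3) nV unfolding Kc_def by (auto dest: set_cond_dist)
        thus ?thesis using set_LU[OF _ mN assms(1)] assms(1) by auto
      qed
    qed
  qed
  ultimately show ?case using u(1) by auto
qed

lemma set_Rlaw_Sall: "p > 0 \<Longrightarrow> set_pmf (Rlaw p n \<beta> q) \<subseteq> Sall p n"
proof
  fix z assume p: "p > 0" and z: "z \<in> set_pmf (Rlaw p n \<beta> q)"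
  have fC: "finite (PiE (V_set p n \<beta> q) (\<lambda>_. {..<p}))" by (simp add: finite_PiE V_fin)
  have neC: "PiE (V_set p n \<beta> q) (\<lambda>_. {..<p}) \<noteq> {}" using p by (auto simp: PiE_eq_empty_iff)
  from z obtain c x u where "c \<in> PiE (V_set p n \<beta> q) (\<lambda>_. {..<p})"
     "x \<in> set_pmf (iid_pmf (2^n) (map_pmf fst q))" "u \<in> set_pmf (sample_U p n \<beta> q c x (2^n))" "z = (x, u)"
    unfolding Rlaw_def by (auto simp: set_pmf_of_set[OF neC fC])
  moreover note set_iid_pmf[OF this(2)] set_sample_U_length[OF this(3)] set_sample_U_range[OF p this(1) _ this(3)]
  ultimately show "z \<in> Sall p n" unfolding Sall_def by simp
qed

lemma finite_Rlaw: "p > 0 \<Longrightarrow> finite (set_pmf (Rlaw p n \<beta> (q :: ('x::finite \<times> nat) pmf)))"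
  by (rule finite_subset[OF set_Rlaw_Sall finite_Sall])


definition Mj :: "nat \<Rightarrow> nat \<Rightarrow> ('x \<times> nat) pmf \<Rightarrow> nat \<Rightarrow> ('x list \<times> nat list) pmf" where
  "Mj p n q j = map_pmf (\<lambda>(x, u). (x, take j u)) (XU_law p n q)"

definition cX :: "nat \<Rightarrow> nat \<Rightarrow> ('x \<times> nat) pmf \<Rightarrow> nat \<Rightarrow> (nat \<times> (nat list \<times> 'x list)) \<Rightarrow> real" where
  "cX p n q j z = pmf (law_U_prefix_X p n q j) z / pmf (map_pmf snd (law_U_prefix_X p n q j)) (snd z)"

definition cU :: "nat \<Rightarrow> nat \<Rightarrow> ('x \<times> nat) pmf \<Rightarrow> nat \<Rightarrow> (nat \<times> nat list) \<Rightarrow> real" where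
  "cU p n q j z = pmf (law_U_prefix p n q j) z / pmf (map_pmf snd (law_U_prefix p n q j)) (snd z)"

context
  fixes p n :: nat and q :: "('x::finite \<times> nat) pmf"
  assumes p: "p > 0"
begin

lemma len_XU: "z \<in> set_pmf (XU_law p n q) \<Longrightarrow> length (snd z) = 2^n"
  using set_XU_law[OF _ p, of "fst z" "snd z" n q] by simp

lemma LX_eq: "law_U_prefix_X p n q j = map_pmf (\<lambda>(x, w). (w ! j, (take j w, x))) (Mj p n q (Suc j))"
  if j: "j < 2^n"
  unfolding law_U_prefix_X_def Mj_def map_pmf_comp
  by (rule map_pmf_cong[OF refl]) (use len_XU j in \<open>auto simp: split_beta\<close>)

lemma set_Mj: "(x, w) \<in> set_pmf (Mj p n q j) \<Longrightarrow> j \<le> 2^n \<Longrightarrow> length w = j"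
proof -
  assume a: "(x, w) \<in> set_pmf (Mj p n q j)" and j: "j \<le> 2^n"
  then obtain u where "(x, u) \<in> set_pmf (XU_law p n q)" "w = take j u" unfolding Mj_def by auto
  thus ?thesis using len_XU[of "(x, u)"] j by simp
qed

lemma pmf_LX_Mj:
  assumes xu: "(x, u) \<in> set_pmf (XU_law p n q)" and j: "j < 2^n"
  shows "pmf (law_U_prefix_X p n q j) (u ! j, (take j u, x)) = pmf (Mj p n q (Suc j)) (x, take (Suc j) u)"
proof -
  have lu: "length u = 2^n" using set_XU_law[OF xu p] by simp
  have inj: "inj_on (\<lambda>(x, w). (w ! j, (take j w, x))) (set_pmf (Mj p n q (Suc j)))"
  proof (rule inj_onI)
    fix z z' assume a0: "z \<in> set_pmf (Mj p n q (Suc j))" "z' \<in> set_pmf (Mj p n q (Suc j))"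
      and e0: "(\<lambda>(x, w). (w ! j, (take j w, x))) z = (\<lambda>(x, w). (w ! j, (take j w, x))) z'"
    obtain x w where zz: "z = (x, w)" by (cases z)
    obtain x' w' where zz': "z' = (x', w')" by (cases z')
    have a: "(x, w) \<in> set_pmf (Mj p n q (Suc j))" "(x', w') \<in> set_pmf (Mj p n q (Suc j))"
      using a0 zz zz' by auto
    have e: "w ! j = w' ! j" "take j w = take j w'" "x = x'" using e0 zz zz' by auto
    have "length w = Suc j" "length w' = Suc j" using set_Mj[OF a(1)] set_Mj[OF a(2)] j by auto
    hence "w = take j w @ [w ! j]" "w' = take j w' @ [w' ! j]"
      by (metis lessI take_Suc_conv_app_nth take_all order_refl)+
    hence "w = w'" using e by metis
    thus "z = z'" using zz zz' e by simp
  qed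
  have mem: "(x, take (Suc j) u) \<in> set_pmf (Mj p n q (Suc j))" unfolding Mj_def using xu by force
  have "pmf (law_U_prefix_X p n q j) ((\<lambda>(x, w). (w ! j, (take j w, x))) (x, take (Suc j) u))
        = pmf (Mj p n q (Suc j)) (x, take (Suc j) u)"
    unfolding LX_eq[OF j] by (rule pmf_map_inj[OF inj mem])
  thus ?thesis using j lu by simp
qed

lemma pmf_LXsnd_Mj:
  "pmf (map_pmf snd (law_U_prefix_X p n q j)) (w, x) = pmf (Mj p n q j) (x, w)"
proof -
  have "map_pmf snd (law_U_prefix_X p n q j) = map_pmf (\<lambda>(x, w). (w, x)) (Mj p n q j)"
    unfolding law_U_prefix_X_def Mj_def map_pmf_comp by (simp add: split_beta)
  moreover have "pmf (map_pmf (\<lambda>(x, w). (w, x)) (Mj p n q j)) ((\<lambda>(x, w). (w, x)) (x, w)) = pmf (Mj p n q j) (x, w)"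
    by (rule pmf_map_inj') (auto simp: inj_def)
  ultimately show ?thesis by simp
qed

lemma Mj_N: "Mj p n q (2^n) = XU_law p n q"
proof -
  have "Mj p n q (2^n) = map_pmf id (XU_law p n q)" unfolding Mj_def
    by (rule map_pmf_cong[OF refl]) (use len_XU in \<open>auto simp: split_beta\<close>)
  thus ?thesis by simp
qed

lemma pmf_Mj0: "pmf (Mj p n q 0) (x, []) = pmf (iid_pmf (2^n) (map_pmf fst q)) x"
proof -
  have "Mj p n q 0 = map_pmf (\<lambda>x. (x, [])) (map_pmf fst (XU_law p n q))"
    unfolding Mj_def map_pmf_comp by (rule map_pmf_cong) auto
  moreover have "pmf (map_pmf (\<lambda>x. (x, [])) (map_pmf fst (XU_law p n q))) ((\<lambda>x. (x, [])) x) = pmf (map_pmf fst (XU_law p n q)) x"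
    by (rule pmf_map_inj') (auto simp: inj_def)
  ultimately have "pmf (Mj p n q 0) (x, []) = pmf (map_pmf fst (XU_law p n q)) x" by simp
  thus ?thesis by (simp add: map_fst_XU_law)
qed

lemma Mj_pos: "(x, u) \<in> set_pmf (XU_law p n q) \<Longrightarrow> pmf (Mj p n q j) (x, take j u) > 0"
proof -
  assume "(x, u) \<in> set_pmf (XU_law p n q)"
  hence "(x, take j u) \<in> set_pmf (Mj p n q j)" unfolding Mj_def by force
  thus ?thesis by (rule pmf_positive)
qed

lemma telescope:
  assumes xu: "(x, u) \<in> set_pmf (XU_law p n q)"
  shows "ln (pmf (XU_law p n q) (x, u)) = ln (pmf (iid_pmf (2^n) (map_pmf fst q)) x)
           + (\<Sum>j<2^n. ln (cX p n q j (u ! j, (take j u, x))))"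
proof -
  define f where "f j = ln (pmf (Mj p n q j) (x, take j u))" for j
  have lu: "length u = 2^n" using set_XU_law[OF xu p] by simp
  have "ln (cX p n q j (u ! j, (take j u, x))) = f (Suc j) - f j" if j: "j < 2^n" for j
    unfolding cX_def f_def using pmf_LX_Mj[OF xu j] pmf_LXsnd_Mj
    using Mj_pos[OF xu, of "Suc j"] Mj_pos[OF xu, of j] by (simp add: ln_div)
  hence "(\<Sum>j<2^n. ln (cX p n q j (u ! j, (take j u, x)))) = (\<Sum>j<2^n. f (Suc j) - f j)" by simp
  also have "\<dots> = f (2^n) - f 0" by (rule sum_lessThan_telescope)
  also have "f (2^n) = ln (pmf (XU_law p n q) (x, u))" unfolding f_def Mj_N using lu by simp
  also have "f 0 = ln (pmf (iid_pmf (2^n) (map_pmf fst q)) x)" unfolding f_def by (simp add: pmf_Mj0)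
  finally show ?thesis by simp
qed

end


lemma exp_sum: "finite (set_pmf M) \<Longrightarrow> measure_pmf.expectation M f = (\<Sum>z\<in>set_pmf M. f z * pmf M z)"
  by (rule integral_measure_pmf_real) auto

lemma exp_cong: "finite (set_pmf M) \<Longrightarrow> (\<And>z. z \<in> set_pmf M \<Longrightarrow> f z = g z) \<Longrightarrow>
    measure_pmf.expectation M f = measure_pmf.expectation M (g :: _ \<Rightarrow> real)"
  by (simp add: exp_sum)

lemma exp_mono: "finite (set_pmf M) \<Longrightarrow> (\<And>z. z \<in> set_pmf M \<Longrightarrow> f z \<le> g z) \<Longrightarrow>
    measure_pmf.expectation M f \<le> measure_pmf.expectation M (g :: _ \<Rightarrow> real)"
  by (simp add: exp_sum sum_mono mult_right_mono)

lemma cond_entropy_exp: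
  assumes fin: "finite (set_pmf L)"
  shows "cond_entropy L = - measure_pmf.expectation L (\<lambda>z. ln (pmf L z / pmf (map_pmf snd L) (snd z))) / ln 2"
proof -
  have "cond_entropy L = (\<Sum>z\<in>set_pmf L. (- ln (pmf L z / pmf (map_pmf snd L) (snd z)) / ln 2) * pmf L z)"
    unfolding cond_entropy_def
  proof (rule sum.cong[OF refl])
    fix z assume z: "z \<in> set_pmf L"
    have a: "pmf L z > 0" using z by (simp add: pmf_positive)
    have b: "pmf (map_pmf snd L) (snd z) > 0" using z by (simp add: pmf_positive)
    show "pmf L z * log 2 (pmf (map_pmf snd L) (snd z) / pmf L z) =
          (- ln (pmf L z / pmf (map_pmf snd L) (snd z)) / ln 2) * pmf L z"
      using a b by (simp add: log_def ln_div)
  qed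
  also have "\<dots> = - (\<Sum>z\<in>set_pmf L. ln (pmf L z / pmf (map_pmf snd L) (snd z)) * pmf L z) / ln 2"
    by (simp add: sum_divide_distrib sum_negf)
  finally show ?thesis by (simp add: exp_sum[OF fin])
qed

definition kapz where "kapz p n \<beta> q j z = kap p n \<beta> q j (fst z) (fst (snd z)) (snd (snd z))"

context
  fixes p n :: nat and \<beta> :: real and q :: "('x::finite \<times> nat) pmf"
  assumes p: "p > 0"
begin

lemma mem_LX: "(x, u) \<in> set_pmf (XU_law p n q) \<Longrightarrow> (u ! j, (take j u, x)) \<in> set_pmf (law_U_prefix_X p n q j)"
  unfolding law_U_prefix_X_def by force

lemma mem_LU: "(x, u) \<in> set_pmf (XU_law p n q) \<Longrightarrow> (u ! j, take j u) \<in> set_pmf (law_U_prefix p n q j)"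
  unfolding law_U_prefix_def by force

lemma finite_LX: "finite (set_pmf (law_U_prefix_X p n q j))"
  unfolding law_U_prefix_X_def by (simp add: finite_imageI finite_XU[OF p])

lemma finite_LU: "finite (set_pmf (law_U_prefix p n q j))"
  unfolding law_U_prefix_def by (simp add: finite_imageI finite_XU[OF p])

lemma cX_pos: "z \<in> set_pmf (law_U_prefix_X p n q j) \<Longrightarrow> cX p n q j z > 0"
  unfolding cX_def by (auto intro!: divide_pos_pos pmf_positive)

lemma cU_pos: "z \<in> set_pmf (law_U_prefix p n q j) \<Longrightarrow> cU p n q j z > 0"
  unfolding cU_def by (auto intro!: divide_pos_pos pmf_positive)

lemma cX_le1: "cX p n q j z \<le> 1"
  unfolding cX_def using pmf_le_map[of "law_U_prefix_X p n q j" z snd]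
  by (cases "pmf (map_pmf snd (law_U_prefix_X p n q j)) (snd z) = 0") (auto simp: divide_le_eq_1)

lemma kapz_cases:
  assumes xu: "(x, u) \<in> set_pmf (XU_law p n q)" and j: "j < 2^n"
  defines "z \<equiv> (u ! j, (take j u, x))"
  shows "kapz p n \<beta> q j z =
     (if j \<in> V_set p n \<beta> q then 1 / real p
      else if j \<in> H_set p n \<beta> q then cX p n q j z
      else cU p n q j (fst z, fst (snd z)))"
proof -
  have lu: "length u = 2^n" "set u \<subseteq> {..<p}" using set_XU_law[OF xu p] by auto
  have ulp: "u ! j < p" using lu j by (metis lessThan_iff nth_mem subsetD)
  have zX: "z \<in> set_pmf (law_U_prefix_X p n q j)" unfolding z_def by (rule mem_LX[OF xu])
  have zU: "(u ! j, take j u) \<in> set_pmf (law_U_prefix p n q j)" by (rule mem_LU[OF xu])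
  have bX: "(take j u, x) \<in> snd ` set_pmf (law_U_prefix_X p n q j)" using zX unfolding z_def by force
  have bU: "take j u \<in> snd ` set_pmf (law_U_prefix p n q j)" using zU by force
  show ?thesis
    unfolding kapz_def kap_def z_def
    using ulp pmf_cond_dist[OF bX] pmf_cond_dist[OF bU] by (simp add: cX_def cU_def)
qed

lemma kapz_pos:
  assumes xu: "(x, u) \<in> set_pmf (XU_law p n q)" and j: "j < 2^n"
  shows "kapz p n \<beta> q j (u ! j, (take j u, x)) > 0"
  unfolding kapz_cases[OF xu j] using p cX_pos[OF mem_LX[OF xu]] cU_pos[OF mem_LU[OF xu]] by auto

lemma ln_ratio:
  assumes xu: "(x, u) \<in> set_pmf (XU_law p n q)"
  shows "ln (pmf (XU_law p n q) (x, u) / pmf (Rlaw p n \<beta> q) (x, u)) =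
     (\<Sum>j<2^n. ln (cX p n q j (u ! j, (take j u, x))) - ln (kapz p n \<beta> q j (u ! j, (take j u, x))))"
proof -
  have lu: "length u = 2^n" and xI: "x \<in> set_pmf (iid_pmf (2^n) (map_pmf fst q))"
    using set_XU_law[OF xu p] by auto
  have I: "pmf (iid_pmf (2^n) (map_pmf fst q)) x > 0" using xI by (simp add: pmf_positive)
  have Rf: "pmf (Rlaw p n \<beta> q) (x, u) = pmf (iid_pmf (2^n) (map_pmf fst q)) x *
            (\<Prod>j<2^n. kapz p n \<beta> q j (u ! j, (take j u, x)))"
    unfolding pmf_Rlaw[OF p lu] kapz_def by simp
  have kp: "\<And>j. j \<in> {..<2^n} \<Longrightarrow> kapz p n \<beta> q j (u ! j, (take j u, x)) > 0" using kapz_pos[OF xu] by simp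
  have prodpos: "(\<Prod>j<2^n. kapz p n \<beta> q j (u ! j, (take j u, x))) > 0" by (rule prod_pos) (use kp in auto)
  have lnR: "ln (pmf (Rlaw p n \<beta> q) (x, u)) = ln (pmf (iid_pmf (2^n) (map_pmf fst q)) x) +
            (\<Sum>j<2^n. ln (kapz p n \<beta> q j (u ! j, (take j u, x))))"
  proof -
    have lp: "ln (\<Prod>j<2^n. kapz p n \<beta> q j (u ! j, (take j u, x))) = (\<Sum>j<2^n. ln (kapz p n \<beta> q j (u ! j, (take j u, x))))"
      by (rule ln_prod) (use kp in \<open>auto simp: less_le\<close>)
    show ?thesis by (simp only: Rf ln_mult_pos[OF I prodpos] lp)
  qed
  have Ppos: "pmf (XU_law p n q) (x, u) > 0" using xu by (simp add: pmf_positive)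
  have Rpos: "pmf (Rlaw p n \<beta> q) (x, u) > 0" unfolding Rf using I prodpos by simp
  show ?thesis using Ppos Rpos
    by (simp add: ln_divide_pos[OF Ppos Rpos] lnR telescope[OF p xu] sum_subtractf)
qed

end


lemma exp_add_const: "finite (set_pmf M) \<Longrightarrow>
   measure_pmf.expectation M (\<lambda>z. f z + c) = measure_pmf.expectation M f + (c::real)"
proof -
  assume fin: "finite (set_pmf M)"
  have "(\<Sum>z\<in>set_pmf M. (f z + c) * pmf M z) = (\<Sum>z\<in>set_pmf M. f z * pmf M z) + c * (\<Sum>z\<in>set_pmf M. pmf M z)"
    by (simp add: algebra_simps sum.distrib sum_distrib_left)
  also have "(\<Sum>z\<in>set_pmf M. pmf M z) = 1" by (rule sum_pmf_eq_1[OF fin]) simp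
  finally show ?thesis by (simp add: exp_sum[OF fin])
qed

lemma exp_sum_swap: "finite (set_pmf M) \<Longrightarrow>
   measure_pmf.expectation M (\<lambda>z. \<Sum>j\<in>I. g j z) = (\<Sum>j\<in>I. measure_pmf.expectation M (g j) :: real)"
  by (simp add: exp_sum sum_distrib_right sum.swap[of _ I])

lemma delta_pos: "delta n \<beta> > 0" unfolding delta_def by simp

context
  fixes p n :: nat and \<beta> :: real and q :: "('x::finite \<times> nat) pmf"
  assumes p: "p > 0"
begin

lemma P_sub_R: "set_pmf (XU_law p n q) \<subseteq> set_pmf (Rlaw p n \<beta> q)"
proof
  fix z assume z: "z \<in> set_pmf (XU_law p n q)"
  obtain x u where xu: "z = (x, u)" by (cases z)
  have xuP: "(x, u) \<in> set_pmf (XU_law p n q)" using z xu by simp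
  have lu: "length u = 2^n" and xI: "x \<in> set_pmf (iid_pmf (2^n) (map_pmf fst q))"
    using set_XU_law[OF xuP p] by auto
  have I: "pmf (iid_pmf (2^n) (map_pmf fst q)) x > 0" using xI by (simp add: pmf_positive)
  have prodpos: "(\<Prod>j<2^n. kapz p n \<beta> q j (u ! j, (take j u, x))) > 0"
    by (rule prod_pos) (use kapz_pos[OF p xuP] in \<open>auto simp: less_imp_le\<close>)
  have "pmf (Rlaw p n \<beta> q) (x, u) > 0"
    unfolding pmf_Rlaw[OF p lu] using I prodpos by (simp add: kapz_def)
  thus "z \<in> set_pmf (Rlaw p n \<beta> q)" using xu by (simp add: set_pmf_iff)
qed

definition termj where "termj j z = ln (cX p n q j z) - ln (kapz p n \<beta> q j z)"

lemma KL_decomp: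
  "measure_pmf.expectation (XU_law p n q) (\<lambda>z. ln (pmf (XU_law p n q) z / pmf (Rlaw p n \<beta> q) z))
   = (\<Sum>j<2^n. measure_pmf.expectation (law_U_prefix_X p n q j) (termj j))"
proof -
  let ?P = "XU_law p n q"
  have fin: "finite (set_pmf ?P)" by (rule finite_XU[OF p])
  have "measure_pmf.expectation ?P (\<lambda>z. ln (pmf ?P z / pmf (Rlaw p n \<beta> q) z))
      = measure_pmf.expectation ?P (\<lambda>z. \<Sum>j<2^n. termj j ((\<lambda>(x, u). (u ! j, (take j u, x))) z))"
  proof (rule exp_cong[OF fin])
    fix z assume z: "z \<in> set_pmf ?P"
    obtain x u where xu: "z = (x, u)" by (cases z)
    show "ln (pmf ?P z / pmf (Rlaw p n \<beta> q) z) = (\<Sum>j<2^n. termj j ((\<lambda>(x, u). (u ! j, (take j u, x))) z))"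
    proof -
      have m: "(x, u) \<in> set_pmf ?P" using z xu by simp
      show ?thesis unfolding xu termj_def using ln_ratio[where \<beta>=\<beta>, OF p m] by simp
    qed
  qed
  also have "\<dots> = (\<Sum>j<2^n. measure_pmf.expectation ?P (\<lambda>z. termj j ((\<lambda>(x, u). (u ! j, (take j u, x))) z)))"
    by (rule exp_sum_swap[OF fin])
  also have "\<dots> = (\<Sum>j<2^n. measure_pmf.expectation (law_U_prefix_X p n q j) (termj j))"
    unfolding law_U_prefix_X_def by simp
  finally show ?thesis .
qed

lemma E_ln_cX: "measure_pmf.expectation (law_U_prefix_X p n q j) (\<lambda>z. ln (cX p n q j z))
    = - ln 2 * cond_entropy (law_U_prefix_X p n q j)"
  unfolding cond_entropy_exp[OF finite_LX[OF p]] cX_def by simp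

lemma E_ln_cU: "measure_pmf.expectation (law_U_prefix p n q j) (\<lambda>z. ln (cU p n q j z))
    = - ln 2 * cond_entropy (law_U_prefix p n q j)"
  unfolding cond_entropy_exp[OF finite_LU[OF p]] cU_def by simp

lemma LU_map: "law_U_prefix p n q j = map_pmf (\<lambda>z. (fst z, fst (snd z))) (law_U_prefix_X p n q j)"
  unfolding law_U_prefix_def law_U_prefix_X_def map_pmf_comp by (rule map_pmf_cong) auto

lemma term_bound:
  assumes j: "j < 2^n"
  shows "measure_pmf.expectation (law_U_prefix_X p n q j) (termj j) \<le> ln 2 * delta n \<beta>"
proof -
  let ?L = "law_U_prefix_X p n q j"
  have fin: "finite (set_pmf ?L)" by (rule finite_LX[OF p])
  have supp: "\<exists>x u. (x, u) \<in> set_pmf (XU_law p n q) \<and> z = (u ! j, (take j u, x))" if "z \<in> set_pmf ?L" for z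
    using that unfolding law_U_prefix_X_def by auto
  show ?thesis
  proof (cases "j \<in> V_set p n \<beta> q")
    case V: True
    have "measure_pmf.expectation ?L (termj j) = measure_pmf.expectation ?L (\<lambda>z. ln (cX p n q j z) + ln (real p))"
    proof (rule exp_cong[OF fin])
      fix z assume "z \<in> set_pmf ?L"
      then obtain x u where xu: "(x, u) \<in> set_pmf (XU_law p n q)" "z = (u ! j, (take j u, x))" using supp by blast
      show "termj j z = ln (cX p n q j z) + ln (real p)"
        unfolding termj_def xu(2) kapz_cases[OF p xu(1) j] using V p by (simp add: ln_div)
    qed
    also have "\<dots> = - ln 2 * cond_entropy ?L + ln (real p)" by (simp add: exp_add_const[OF fin] E_ln_cX)
    also have "\<dots> < ln 2 * delta n \<beta>"
    proof -
      have "cond_entropy ?L > log 2 (real p) - delta n \<beta>" using V unfolding V_set_def by simp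
      hence "ln 2 * cond_entropy ?L > ln 2 * (log 2 (real p) - delta n \<beta>)" by simp
      moreover have "ln 2 * log 2 (real p) = ln (real p)" by (simp add: log_def)
      ultimately show ?thesis by (simp add: algebra_simps)
    qed
    finally show ?thesis by simp
  next
    case nV: False
    show ?thesis
    proof (cases "j \<in> H_set p n \<beta> q")
      case H: True
      have "measure_pmf.expectation ?L (termj j) = measure_pmf.expectation ?L (\<lambda>z. 0)"
      proof (rule exp_cong[OF fin])
        fix z assume "z \<in> set_pmf ?L"
        then obtain x u where xu: "(x, u) \<in> set_pmf (XU_law p n q)" "z = (u ! j, (take j u, x))" using supp by blast
        show "termj j z = 0"
          unfolding termj_def xu(2) kapz_cases[OF p xu(1) j] using nV H by simp
      qed
      thus ?thesis using delta_pos[of n \<beta>] by simp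
    next
      case nH: False
      have "measure_pmf.expectation ?L (termj j) \<le> measure_pmf.expectation ?L (\<lambda>z. - ln (cU p n q j (fst z, fst (snd z))))"
      proof (rule exp_mono[OF fin])
        fix z assume "z \<in> set_pmf ?L"
        then obtain x u where xu: "(x, u) \<in> set_pmf (XU_law p n q)" "z = (u ! j, (take j u, x))" using supp by blast
        have "ln (cX p n q j z) \<le> 0" using cX_pos[OF p mem_LX[OF p xu(1)], of j] cX_le1[OF p, of n q j z] xu(2) by simp
        thus "termj j z \<le> - ln (cU p n q j (fst z, fst (snd z)))"
          unfolding termj_def using kapz_cases[OF p xu(1) j, of \<beta>] nV nH xu(2) by simp
      qed
      also have "\<dots> = measure_pmf.expectation (law_U_prefix p n q j) (\<lambda>z. - ln (cU p n q j z))"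
        unfolding LU_map by simp
      also have "\<dots> = ln 2 * cond_entropy (law_U_prefix p n q j)"
        using E_ln_cU by simp
      also have "\<dots> \<le> ln 2 * delta n \<beta>"
        using nH j unfolding H_set_def by simp
      finally show ?thesis .
    qed
  qed
qed

lemma KL_bound:
  "measure_pmf.expectation (XU_law p n q) (\<lambda>z. ln (pmf (XU_law p n q) z / pmf (Rlaw p n \<beta> q) z))
   \<le> real (2^n) * (ln 2 * delta n \<beta>)"
proof -
  have "(\<Sum>j<2^n. measure_pmf.expectation (law_U_prefix_X p n q j) (termj j)) \<le> (\<Sum>j<(2::nat)^n. ln 2 * delta n \<beta>)"
    by (rule sum_mono) (rule term_bound, simp)
  thus ?thesis unfolding KL_decomp by simp
qed

lemma main_XU:
  "var_dist (XU_law p n q) (Rlaw p n \<beta> q) \<le> sqrt (2 * ln 2) * sqrt (real (2^n) * delta n \<beta>)"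
proof -
  have "var_dist (XU_law p n q) (Rlaw p n \<beta> q) \<le>
        sqrt (2 * measure_pmf.expectation (XU_law p n q) (\<lambda>z. ln (pmf (XU_law p n q) z / pmf (Rlaw p n \<beta> q) z)))"
    by (rule pinsker_finite[OF finite_Rlaw[OF p] P_sub_R])
  also have "\<dots> \<le> sqrt (2 * (real (2^n) * (ln 2 * delta n \<beta>)))"
    using KL_bound by simp
  also have "\<dots> = sqrt (2 * ln 2) * sqrt (real (2^n) * delta n \<beta>)"
    by (simp add: real_sqrt_mult[symmetric] algebra_simps)
  finally show ?thesis .
qed

end


lemma pmf_map_sum:
  assumes fin: "finite S" and sub: "set_pmf A \<subseteq> S"
  shows "pmf (map_pmf f A) w = (\<Sum>z\<in>{z\<in>S. f z = w}. pmf A z)"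
proof -
  have "pmf (map_pmf f A) w = measure_pmf.prob A (f -` {w})" by (rule pmf_map)
  also have "\<dots> = measure_pmf.prob A (f -` {w} \<inter> set_pmf A)" by (rule measure_Int_set_pmf[symmetric])
  also have "f -` {w} \<inter> set_pmf A = {z\<in>S. f z = w} \<inter> set_pmf A" using sub by auto
  also have "measure_pmf.prob A \<dots> = measure_pmf.prob A {z\<in>S. f z = w}" by (rule measure_Int_set_pmf)
  also have "\<dots> = (\<Sum>z\<in>{z\<in>S. f z = w}. pmf A z)" by (rule measure_measure_pmf_finite) (use fin in simp)
  finally show ?thesis .
qed

lemma var_dist_map:
  assumes fA: "finite (set_pmf A)" and fB: "finite (set_pmf B)"
  shows "var_dist (map_pmf f A) (map_pmf f B) \<le> var_dist A B"
proof -
  define S where "S = set_pmf A \<union> set_pmf B"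
  have fS: "finite S" unfolding S_def using fA fB by simp
  have fT: "finite (f ` S)" using fS by simp
  have "var_dist (map_pmf f A) (map_pmf f B) = (\<Sum>w\<in>f ` S. \<bar>pmf (map_pmf f A) w - pmf (map_pmf f B) w\<bar>)"
    by (rule var_dist_finite[OF fT]) (auto simp: S_def)
  also have "\<dots> = (\<Sum>w\<in>f ` S. \<bar>\<Sum>z\<in>{z\<in>S. f z = w}. pmf A z - pmf B z\<bar>)"
    by (simp add: pmf_map_sum[OF fS] S_def sum_subtractf)
  also have "\<dots> \<le> (\<Sum>w\<in>f ` S. \<Sum>z\<in>{z\<in>S. f z = w}. \<bar>pmf A z - pmf B z\<bar>)"
    by (rule sum_mono) (rule sum_abs)
  also have "\<dots> = (\<Sum>z\<in>S. \<bar>pmf A z - pmf B z\<bar>)"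
    by (rule sum.group[OF fS fT]) simp
  also have "\<dots> = var_dist A B" by (rule var_dist_finite[symmetric, OF fS]) (auto simp: S_def)
  finally show ?thesis .
qed

lemma inv_target:
  assumes p: "p > 0" and qs: "set_pmf q \<subseteq> UNIV \<times> {..<p}" and z: "z \<in> set_pmf (target_law n q)"
  shows "polar_inverse p n (polar_transform p n (snd z)) = snd z"
proof -
  obtain l where l: "l \<in> set_pmf (iid_pmf (2^n) q)" "z = (map fst l, map snd l)"
    using z unfolding target_law_def by auto
  have "length l = 2^n" "set l \<subseteq> set_pmf q" using set_iid_pmf[OF l(1)] by auto
  hence "length (map snd l) = 2^n" "set (map snd l) \<subseteq> {..<p}" using qs by auto
  hence "polar_inverse p n (polar_transform p n (map snd l)) = map snd l"
    by (rule polar_inverse_transform)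
  thus ?thesis using l(2) by simp
qed

lemma target_eq:
  assumes p: "p > 0" and qs: "set_pmf q \<subseteq> UNIV \<times> {..<p}"
  shows "target_law n q = map_pmf (\<lambda>(x, u). (x, polar_inverse p n u)) (XU_law p n q)"
proof -
  have "map_pmf (\<lambda>(x, u). (x, polar_inverse p n u)) (XU_law p n q) = map_pmf id (target_law n q)"
    unfolding XU_law_def map_pmf_comp
    by (rule map_pmf_cong[OF refl]) (auto simp: split_beta inv_target[OF p qs])
  thus ?thesis by simp
qed

lemma block_eq:
  assumes "1 \<le> i" "i \<le> k"
  shows "block_law p n \<beta> q k i = map_pmf (\<lambda>(x, u). (x, polar_inverse p n u)) (Rlaw p n \<beta> q)"
proof -
  have ik: "i - 1 < k" using assms by simp
  show ?thesis
    unfolding block_law_def scheme_pmf_def Rlaw_def map_bind_pmf blocks_nth[OF ik] block_pmf_def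
    by (simp add: map_bind_pmf map_pmf_comp)
qed

theorem lemma6:
  fixes q :: "('x::finite \<times> nat) pmf" and p n k i :: nat and \<beta> :: real
  assumes "prime p"
    and "set_pmf q \<subseteq> UNIV \<times> {..<p}"
    and "0 < \<beta>" and "\<beta> < 1/2"
    and "1 \<le> i" and "i \<le> k"
  shows "var_dist (target_law n q) (block_law p n \<beta> q k i)
           \<le> sqrt (2 * ln 2) * sqrt (real (2^n) * delta n \<beta>)"
proof -
  have p: "p > 0" using assms(1) prime_gt_0_nat by blast
  have "var_dist (target_law n q) (block_law p n \<beta> q k i) =
        var_dist (map_pmf (\<lambda>(x, u). (x, polar_inverse p n u)) (XU_law p n q))
                 (map_pmf (\<lambda>(x, u). (x, polar_inverse p n u)) (Rlaw p n \<beta> q))"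
    by (simp only: target_eq[OF p assms(2)] block_eq[OF assms(5,6)])
  also have "\<dots> \<le> var_dist (XU_law p n q) (Rlaw p n \<beta> q)"
    by (rule var_dist_map[OF finite_XU[OF p] finite_Rlaw[OF p]])
  also have "\<dots> \<le> sqrt (2 * ln 2) * sqrt (real (2^n) * delta n \<beta>)"
    by (rule main_XU[OF p])
  finally show ?thesis .
qed


end
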